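(* Let $L$ be a totally ordered normal incline and let $A$ be an $n\times n$ completely positive matrix over $L$. Then $\mathrm{CP\text{-}rank}(A)\le\max\{n,[n^2/4]\}$. Further, for $n\ge 4$, $A$ has an $[n^2/4]$-support $3$ rank $1$ CP-representation, i.e. there exist $m\le[n^2/4]$ column vectors $b_1,\dots,b_m\in L^n$, each having at most three entries different from $\mathbf{0}$, such that $A=\bigoplus_{j=1}^m b_jb_j^T$.
   Context: An incline is a nonempty set $L$ with binary operations $\oplus,\otimes$ such that $(L,\oplus)$ is a semilattice ($\oplus$ associative, commutative, idempotent), $(L,\otimes)$ is a semigroup, $x\otimes(y\oplus z)=(x\otimes y)\oplus(x\otimes z)$ and $x\oplus(x\otimes y)=x$ for all $x,y,z$. The order is $x\le y\iff x\oplus y=y$; $L$ is totally ordered if this order is total, and commutative if $\otimes$ is commutative. An r-ideal is a nonempty $J\subseteq L$ closed under $\oplus$ and under multiplication by arbitrary elements of $L$; a lattice ideal is a nonempty $J\subseteq L$ closed under $\oplus$ and downward closed. A commutative incline $L$ is normal if it has an additive identity $\mathbf{0}$ and a multiplicative identity $\mathbf{1}$ and: every singly generated r-ideal is a lattice ideal (LI-property); for each $x\in L$ there is a unique $c$ with $c\otimes c=x$ (unique square root property); $x\otimes y\le(x\otimes x)\oplus(y\otimes y)$ for all $x,y$ (AG-property). Matrix product: $(BC)_{ij}=\bigoplus_k b_{ik}\otimes c_{kj}$; matrix sum $\oplus$ is entrywise; $B^T$ is the transpose. $A$ is completely positive if $A=BB^T$ for some $n\times k$ matrix $B$ over $L$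 all of whose entries are of the form $c\otimes c$. The CP-rank of a completely positive $A$ is the smallest $k$ such that $A=BB^T$ with $B$ an $n\times k$ matrix over $L$. $[x]$ is the greatest integer not exceeding $x$. *)

theory Defs
  imports Main
begin

definition incline :: "('a \<Rightarrow> 'a \<Rightarrow> 'a) \<Rightarrow> ('a \<Rightarrow> 'a \<Rightarrow> 'a) \<Rightarrow> bool" where
  "incline pl tm \<longleftrightarrow>
     (\<forall>x y z. pl (pl x y) z = pl x (pl y z)) \<and> (\<forall>x y. pl x y = pl y x) \<and> (\<forall>x. pl x x = x) \<and>
     (\<forall>x y z. tm (tm x y) z = tm x (tm y z)) \<and>
     (\<forall>x y z. tm x (pl y z) = pl (tm x y) (tm x z)) \<and>
     (\<forall>x y. pl x (tm x y) = x)"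

definition inc_le :: "('a \<Rightarrow> 'a \<Rightarrow> 'a) \<Rightarrow> 'a \<Rightarrow> 'a \<Rightarrow> bool" where
  "inc_le pl x y \<longleftrightarrow> pl x y = y"

definition totally_ordered_incline :: "('a \<Rightarrow> 'a \<Rightarrow> 'a) \<Rightarrow> bool" where
  "totally_ordered_incline pl \<longleftrightarrow> (\<forall>x y. inc_le pl x y \<or> inc_le pl y x)"

definition r_ideal :: "('a \<Rightarrow> 'a \<Rightarrow> 'a) \<Rightarrow> ('a \<Rightarrow> 'a \<Rightarrow> 'a) \<Rightarrow> 'a set \<Rightarrow> bool" where
  "r_ideal pl tm J \<longleftrightarrow> J \<noteq> {} \<and> (\<forall>x\<in>J. \<forall>y\<in>J. pl x y \<in> J) \<and>
     (\<forall>x\<in>J. \<forall>y. tm y x \<in> J \<and> tm x y \<in> J)"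

definition lattice_ideal :: "('a \<Rightarrow> 'a \<Rightarrow> 'a) \<Rightarrow> 'a set \<Rightarrow> bool" where
  "lattice_ideal pl J \<longleftrightarrow> J \<noteq> {} \<and> (\<forall>x\<in>J. \<forall>y\<in>J. pl x y \<in> J) \<and>
     (\<forall>x\<in>J. \<forall>y. inc_le pl y x \<longrightarrow> y \<in> J)"

definition gen_r_ideal :: "('a \<Rightarrow> 'a \<Rightarrow> 'a) \<Rightarrow> ('a \<Rightarrow> 'a \<Rightarrow> 'a) \<Rightarrow> 'a \<Rightarrow> 'a set" where
  "gen_r_ideal pl tm x = \<Inter>{J. r_ideal pl tm J \<and> x \<in> J}"

definition normal_incline ::
  "('a \<Rightarrow> 'a \<Rightarrow> 'a) \<Rightarrow> ('a \<Rightarrow> 'a \<Rightarrow> 'a) \<Rightarrow> 'a \<Rightarrow> 'a \<Rightarrow> bool" where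
  "normal_incline pl tm z e \<longleftrightarrow>
     incline pl tm \<and> (\<forall>x y. tm x y = tm y x) \<and>
     (\<forall>x. pl z x = x) \<and> (\<forall>x. tm e x = x \<and> tm x e = x) \<and>
     (\<forall>x. lattice_ideal pl (gen_r_ideal pl tm x)) \<and>
     (\<forall>x. \<exists>!c. tm c c = x) \<and>
     (\<forall>x y. inc_le pl (tm x y) (pl (tm x x) (tm y y)))"

definition isum :: "('a \<Rightarrow> 'a \<Rightarrow> 'a) \<Rightarrow> 'a \<Rightarrow> (nat \<Rightarrow> 'a) \<Rightarrow> nat \<Rightarrow> 'a" where
  "isum pl z f k = foldr (\<lambda>j acc. pl (f j) acc) [0..<k] z"

definition BBt :: "('a \<Rightarrow> 'a \<Rightarrow> 'a) \<Rightarrow> ('a \<Rightarrow> 'a \<Rightarrow> 'a) \<Rightarrow> 'a \<Rightarrow> (nat \<Rightarrow> nat \<Rightarrow> 'a) \<Rightarrow> nat \<Rightarrow> nat \<Rightarrow> nat \<Rightarrow> 'a" where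
  "BBt pl tm z B k i j = isum pl z (\<lambda>l. tm (B i l) (B j l)) k"

definition completely_positive ::
  "('a \<Rightarrow> 'a \<Rightarrow> 'a) \<Rightarrow> ('a \<Rightarrow> 'a \<Rightarrow> 'a) \<Rightarrow> 'a \<Rightarrow> nat \<Rightarrow> (nat \<Rightarrow> nat \<Rightarrow> 'a) \<Rightarrow> bool" where
  "completely_positive pl tm z n A \<longleftrightarrow>
     (\<exists>k B. (\<forall>i<n. \<forall>l<k. \<exists>c. B i l = tm c c) \<and>
            (\<forall>i<n. \<forall>j<n. A i j = BBt pl tm z B k i j))"

definition cp_rank ::
  "('a \<Rightarrow> 'a \<Rightarrow> 'a) \<Rightarrow> ('a \<Rightarrow> 'a \<Rightarrow> 'a) \<Rightarrow> 'a \<Rightarrow> nat \<Rightarrow> (nat \<Rightarrow> nat \<Rightarrow> 'a) \<Rightarrow> nat" where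
  "cp_rank pl tm z n A = (LEAST k. \<exists>B. \<forall>i<n. \<forall>j<n. A i j = BBt pl tm z B k i j)"

end

theory Submission
  imports Defs
begin


locale tni =
  fixes pl tm :: "'a \<Rightarrow> 'a \<Rightarrow> 'a" and z e :: 'a
  assumes N: "normal_incline pl tm z e" and T: "totally_ordered_incline pl"
begin

abbreviation le where "le \<equiv> inc_le pl"

lemma NN: "incline pl tm \<and> (\<forall>x y. tm x y = tm y x) \<and>
     (\<forall>x. pl z x = x) \<and> (\<forall>x. tm e x = x \<and> tm x e = x) \<and>
     (\<forall>x. lattice_ideal pl (gen_r_ideal pl tm x)) \<and>
     (\<forall>x. \<exists>!c. tm c c = x)" using N unfolding normal_incline_def by (elim conjE) (intro conjI; assumption)
lemma II: "(\<forall>x y z. pl (pl x y) z = pl x (pl y z)) \<and> (\<forall>x y. pl x y = pl y x) \<and> (\<forall>x. pl x x = x) \<and>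
     (\<forall>x y z. tm (tm x y) z = tm x (tm y z)) \<and>
     (\<forall>x y z. tm x (pl y z) = pl (tm x y) (tm x z)) \<and>
     (\<forall>x y. pl x (tm x y) = x)" using NN unfolding incline_def by (elim conjE) (intro conjI; assumption)
lemma pl_assoc: "pl (pl x y) w = pl x (pl y w)" using II by (elim conjE allE)
lemma pl_comm: "pl x y = pl y x" using II by (elim conjE allE)
lemma pl_idem: "pl x x = x" using II by (elim conjE allE)
lemma tm_assoc: "tm (tm x y) w = tm x (tm y w)" using II by (elim conjE allE)
lemma distr: "tm x (pl y w) = pl (tm x y) (tm x w)" using II by (elim conjE allE)
lemma absorb: "pl x (tm x y) = x" using II by (elim conjE allE)
lemma tm_comm: "tm x y = tm y x" using NN by (elim conjE allE)
lemma z_id: "pl z x = x" using NN by (elim conjE allE)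
lemma e_id: "tm e x = x" "tm x e = x" using NN by (elim conjE allE; simp)+
lemma LI: "lattice_ideal pl (gen_r_ideal pl tm x)" using NN by (elim conjE allE)
lemma usq: "\<exists>!c. tm c c = x" using NN by (elim conjE allE)
lemma total: "le x y \<or> le y x" using T unfolding totally_ordered_incline_def by (elim allE)

lemma le_refl: "le x x" by (simp add: inc_le_def pl_idem)
lemma le_trans: "le x y \<Longrightarrow> le y w \<Longrightarrow> le x w"
  unfolding inc_le_def by (metis pl_assoc)
lemma le_antisym: "le x y \<Longrightarrow> le y x \<Longrightarrow> x = y"
  unfolding inc_le_def by (metis pl_comm)
lemma le_pl1: "le x (pl x y)" unfolding inc_le_def by (metis pl_assoc pl_idem)
lemma le_pl2: "le y (pl x y)" using le_pl1 pl_comm by metis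
lemma pl_le: "le x c \<Longrightarrow> le y c \<Longrightarrow> le (pl x y) c"
  unfolding inc_le_def by (metis pl_assoc)
lemma tm_le1: "le (tm x y) x" unfolding inc_le_def by (metis absorb pl_comm)
lemma tm_le2: "le (tm x y) y" using tm_le1 tm_comm by metis
lemma mono: "le y y' \<Longrightarrow> le (tm x y) (tm x y')"
  unfolding inc_le_def by (metis distr)
lemma mono2: "le x x' \<Longrightarrow> le y y' \<Longrightarrow> le (tm x y) (tm x' y')"
  by (metis le_trans mono tm_comm)
lemma z_bot: "le z x" by (simp add: inc_le_def z_id)
lemma tm_z: "tm x z = z" "tm z x = z"
  using le_antisym tm_le2 tm_le1 z_bot by metis+
lemma sq_le: "le (tm b b) (tm c c) \<Longrightarrow> le b c"
proof -
  assume a: "le (tm b b) (tm c c)"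
  show "le b c"
  proof (cases "le b c")
    case False
    then have "le c b" using total by blast
    then have "le (tm c c) (tm b b)" using mono2 by blast
    then have "tm c c = tm b b" using a le_antisym by blast
    then have "b = c" using usq[of "tm c c"] by metis
    then show ?thesis using le_refl by simp
  qed
qed

lemma scale: assumes "le a (tm x y)" shows "\<exists>w. le w y \<and> a = tm x w"
proof -
  let ?g = "tm x y"
  let ?R = "{tm ?g t | t. True}"
  have gin: "?g \<in> gen_r_ideal pl tm ?g" unfolding gen_r_ideal_def by blast
  have ain: "a \<in> gen_r_ideal pl tm ?g"
    using LI[of ?g] gin assms unfolding lattice_ideal_def by blast
  have "r_ideal pl tm ?R" unfolding r_ideal_def
  proof (intro conjI ballI allI)
    show "?R \<noteq> {}" by blast
  next
    fix p q assume "p \<in> ?R" "q \<in> ?R"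
    then show "pl p q \<in> ?R" by (auto simp: distr[symmetric])
  next
    fix p y' assume "p \<in> ?R"
    then obtain t where p: "p = tm ?g t" by blast
    show "tm y' p \<in> ?R" unfolding p by (metis (mono_tags, lifting) mem_Collect_eq tm_assoc tm_comm)
    show "tm p y' \<in> ?R" unfolding p by (metis (mono_tags, lifting) mem_Collect_eq tm_assoc)
  qed
  moreover have "?g \<in> ?R" using e_id(2)[of ?g] by (metis (mono_tags, lifting) mem_Collect_eq)
  ultimately have "gen_r_ideal pl tm ?g \<subseteq> ?R" unfolding gen_r_ideal_def by blast
  with ain obtain t where "a = tm ?g t" by blast
  then show ?thesis by (metis tm_assoc tm_le1)
qed

lemma foldr_le: "le (foldr (\<lambda>j acc. pl (f j) acc) xs a) c \<longleftrightarrow> (\<forall>j\<in>set xs. le (f j) c) \<and> le a c"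
  by (induction xs) (auto intro: pl_le le_trans le_pl1 le_pl2)
lemma foldr_ge: "j \<in> set xs \<Longrightarrow> le (f j) (foldr (\<lambda>j acc. pl (f j) acc) xs a)"
  by (induction xs) (auto intro: le_trans le_pl1 le_pl2)

lemma isum_eq:
  assumes "\<forall>j<m. le (f j) c" "j0 < m" "f j0 = c"
  shows "isum pl z f m = c"
proof -
  have "le (isum pl z f m) c" unfolding isum_def using assms(1) by (auto simp: foldr_le z_bot)
  moreover have "le c (isum pl z f m)" unfolding isum_def using foldr_ge[of j0 "[0..<m]" f z] assms by auto
  ultimately show ?thesis using le_antisym by blast
qed

lemma isum_ge: "j < m \<Longrightarrow> le (f j) (isum pl z f m)"
  unfolding isum_def using foldr_ge[of j "[0..<m]" f z] by auto
lemma isum_le: "\<forall>j<m. le (f j) c \<Longrightarrow> le (isum pl z f m) c"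
  unfolding isum_def by (auto simp: foldr_le z_bot)

end



locale tcp = tni pl tm z e for pl tm :: "'a \<Rightarrow> 'a \<Rightarrow> 'a" and z e :: 'a +
  fixes A :: "nat \<Rightarrow> nat \<Rightarrow> 'a" and n :: nat and s :: "nat \<Rightarrow> 'a"
  assumes Asym: "i < n \<Longrightarrow> j < n \<Longrightarrow> A i j = A j i"
    and Adiag: "i < n \<Longrightarrow> A i i = tm (s i) (s i)"
    and Abnd: "i < n \<Longrightarrow> j < n \<Longrightarrow> le (A i j) (tm (s i) (s j))"
begin

definition t :: "nat \<Rightarrow> nat \<Rightarrow> 'a" where
  "t i j = (SOME y. le y (s j) \<and> tm (s i) y = A i j)"

lemma t: assumes "i < n" "j < n" shows "le (t i j) (s j)" "tm (s i) (t i j) = A i j"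
proof -
  have "\<exists>y. le y (s j) \<and> tm (s i) y = A i j" using scale[OF Abnd[OF assms]] by metis
  then have "le (t i j) (s j) \<and> tm (s i) (t i j) = A i j" unfolding t_def by (rule someI_ex)
  then show "le (t i j) (s j)" "tm (s i) (t i j) = A i j" by auto
qed

lemma t': assumes "i < n" "j < n" shows "tm (t i j) (s i) = A j i"
  using t(2)[OF assms] Asym[OF assms] tm_comm by metis

definition cherry :: "nat \<Rightarrow> nat \<Rightarrow> nat \<Rightarrow> nat \<Rightarrow> 'a" where
  "cherry i j k = (\<lambda>x. if x = i then s i else if x = j then t i j else if x = k then t i k else z)"
definition edge :: "nat \<Rightarrow> nat \<Rightarrow> nat \<Rightarrow> 'a" where
  "edge i j = (\<lambda>x. if x = i then s i else if x = j then t i j else z)"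
definition diagv :: "nat \<Rightarrow> nat \<Rightarrow> 'a" where
  "diagv i = (\<lambda>x. if x = i then s i else z)"

definition valid :: "(nat \<Rightarrow> 'a) \<Rightarrow> bool" where
  "valid v \<longleftrightarrow> (\<forall>x<n. \<forall>y<n. le (tm (v x) (v y)) (A x y))"
definition good :: "(nat \<Rightarrow> 'a) \<Rightarrow> bool" where
  "good v \<longleftrightarrow> valid v \<and> card {x. x < n \<and> v x \<noteq> z} \<le> 3"

lemma good_sub: assumes "valid v" "{x. x < n \<and> v x \<noteq> z} \<subseteq> {a,b,c}" shows "good v"
proof -
  have "card {x. x < n \<and> v x \<noteq> z} \<le> card {a,b,c}" using assms(2) by (intro card_mono) auto
  also have "\<dots> \<le> 3" by (simp add: card_insert_if)
  finally show ?thesis using assms(1) unfolding good_def by simp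
qed

lemma valid_I: assumes "\<And>x y. x < n \<Longrightarrow> y < n \<Longrightarrow> v x \<noteq> z \<Longrightarrow> v y \<noteq> z \<Longrightarrow> le (tm (v x) (v y)) (A x y)"
  shows "valid v"
  unfolding valid_def using assms tm_z z_bot by metis

lemma tt_le: assumes "j < n" "i < n" "k < n" shows "le (tm (t j i) (t k i)) (A i i)"
  using mono2[OF t(1)[OF assms(1,2)] t(1)[OF assms(3,2)]] Adiag[OF assms(2)] by simp

lemma cherry_good:
  assumes n: "i < n" "j < n" "k < n" and d: "i \<noteq> j" "i \<noteq> k" "j \<noteq> k" and c: "le (t i j) (t k j)"
  shows "good (cherry i j k)"
proof (rule good_sub)
  show "{x. x < n \<and> cherry i j k x \<noteq> z} \<subseteq> {i,j,k}" unfolding cherry_def by auto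
  have jk: "le (tm (t i j) (t i k)) (A j k)"
  proof -
    have "le (tm (t i j) (t i k)) (tm (t k j) (s k))" using mono2[OF c t(1)[OF n(1,3)]] .
    moreover have "tm (t k j) (s k) = A j k" using t'[OF n(3,2)] .
    ultimately show ?thesis by simp
  qed
  have kj: "le (tm (t i k) (t i j)) (A k j)" using jk tm_comm Asym n by metis
  have f1: "le (tm (s i) (s i)) (A i i)" using Adiag n le_refl by simp
  have f2: "le (tm (s i) (t i j)) (A i j)" "le (tm (s i) (t i k)) (A i k)"
    using t(2) n le_refl by simp_all
  have f3: "le (tm (t i j) (s i)) (A j i)" "le (tm (t i k) (s i)) (A k i)"
    using t' n le_refl by simp_all
  have f4: "le (tm (t i j) (t i j)) (A j j)" "le (tm (t i k) (t i k)) (A k k)"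
    using tt_le n by simp_all
  show "valid (cherry i j k)"
  proof (rule valid_I)
    fix x y assume "x < n" "y < n" "cherry i j k x \<noteq> z" "cherry i j k y \<noteq> z"
    then have "x \<in> {i,j,k}" "y \<in> {i,j,k}" unfolding cherry_def by (auto split: if_splits)
    then show "le (tm (cherry i j k x) (cherry i j k y)) (A x y)"
      using d f1 f2 f3 f4 jk kj unfolding cherry_def by auto
  qed
qed

lemma edge_good:
  assumes n: "i < n" "j < n" and d: "i \<noteq> j"
  shows "good (edge i j)"
proof (rule good_sub)
  show "{x. x < n \<and> edge i j x \<noteq> z} \<subseteq> {i,j,j}" unfolding edge_def by auto
  have f1: "le (tm (s i) (s i)) (A i i)" using Adiag n le_refl by simp
  have f2: "le (tm (s i) (t i j)) (A i j)" using t(2) n le_refl by simp_all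
  have f3: "le (tm (t i j) (s i)) (A j i)" using t' n le_refl by simp_all
  have f4: "le (tm (t i j) (t i j)) (A j j)" using tt_le n by simp_all
  show "valid (edge i j)"
  proof (rule valid_I)
    fix x y assume "x < n" "y < n" "edge i j x \<noteq> z" "edge i j y \<noteq> z"
    then have "x \<in> {i,j}" "y \<in> {i,j}" unfolding edge_def by (auto split: if_splits)
    then show "le (tm (edge i j x) (edge i j y)) (A x y)"
      using d f1 f2 f3 f4 unfolding edge_def by auto
  qed
qed

lemma diagv_good:
  assumes n: "i < n"
  shows "good (diagv i)"
proof (rule good_sub)
  show "{x. x < n \<and> diagv i x \<noteq> z} \<subseteq> {i,i,i}" unfolding diagv_def by auto
  have f1: "le (tm (s i) (s i)) (A i i)" using Adiag n le_refl by simp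
  show "valid (diagv i)"
  proof (rule valid_I)
    fix x y assume "x < n" "y < n" "diagv i x \<noteq> z" "diagv i y \<noteq> z"
    then show "le (tm (diagv i x) (diagv i y)) (A x y)"
      using f1 unfolding diagv_def by (auto split: if_splits)
  qed
qed

definition covers :: "(nat \<Rightarrow> 'a) list \<Rightarrow> nat \<Rightarrow> nat \<Rightarrow> bool" where
  "covers vs i j \<longleftrightarrow> (\<exists>v\<in>set vs. tm (v i) (v j) = A i j)"

lemma covers_sym: "i < n \<Longrightarrow> j < n \<Longrightarrow> covers vs i j \<Longrightarrow> covers vs j i"
  unfolding covers_def using Asym tm_comm by metis

lemma covers_mono: "covers vs i j \<Longrightarrow> set vs \<subseteq> set ws \<Longrightarrow> covers ws i j"
  unfolding covers_def by blast

lemma covers_in: "v \<in> set vs \<Longrightarrow> tm (v i) (v j) = A i j \<Longrightarrow> covers vs i j"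
  unfolding covers_def by blast

lemma cherry_cov:
  assumes n: "i < n" "j < n" "k < n" and d: "i \<noteq> j" "i \<noteq> k" "j \<noteq> k"
  shows "tm (cherry i j k i) (cherry i j k i) = A i i"
    "tm (cherry i j k i) (cherry i j k j) = A i j"
    "tm (cherry i j k i) (cherry i j k k) = A i k"
  using d Adiag[OF n(1)] t(2) n unfolding cherry_def by auto

lemma edge_cov:
  assumes n: "i < n" "j < n" and d: "i \<noteq> j"
  shows "tm (edge i j i) (edge i j i) = A i i"
    "tm (edge i j i) (edge i j j) = A i j"
  using d Adiag[OF n(1)] t(2) n unfolding edge_def by auto

lemma diagv_cov: "i < n \<Longrightarrow> tm (diagv i i) (diagv i i) = A i i"
  using Adiag unfolding diagv_def by auto

end



context tni begin
lemma argmax: "finite T \<Longrightarrow> T \<noteq> {} \<Longrightarrow> \<exists>w\<in>T. \<forall>x\<in>T. le (f x) (f w)"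
proof (induction T rule: finite_ne_induct)
  case (singleton x) then show ?case using le_refl by auto
next
  case (insert a F)
  then obtain w where w: "w \<in> F" "\<forall>x\<in>F. le (f x) (f w)" by blast
  show ?case
  proof (cases "le (f a) (f w)")
    case True then show ?thesis using w by auto
  next
    case False
    then have "le (f w) (f a)" using total by blast
    then show ?thesis using w le_trans le_refl by blast
  qed
qed
end

lemma sq_div4: "(m + 2) ^ 2 div 4 = m ^ 2 div 4 + m + (1::nat)"
proof -
  have "(m + 2) ^ 2 = m ^ 2 + (m + 1) * 4" by (simp add: power2_eq_square algebra_simps)
  then show ?thesis by simp
qed

context tcp begin

lemma main:
  assumes "finite S" "S \<subseteq> {..<n}"
  shows "\<exists>vs M. M \<subseteq> S \<and> card M \<le> 1 \<and> (M \<noteq> {} \<longrightarrow> card S \<le> 3) \<and> length vs \<le> card S ^ 2 div 4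
     \<and> (\<forall>v\<in>set vs. good v) \<and> (\<forall>i\<in>S. \<forall>j\<in>S. (i \<noteq> j \<or> i \<notin> M) \<longrightarrow> covers vs i j)"
  using assms
proof (induction "card S" arbitrary: S rule: less_induct)
  case less
  show ?case
  proof (cases "card S \<le> 1")
    case True
    have eq: "\<forall>x\<in>S. \<forall>y\<in>S. x = y" using True less.prems(1) by (metis card_le_Suc0_iff_eq One_nat_def)
    show ?thesis
      apply (rule exI[of _ "[]"], rule exI[of _ S])
      using True eq by auto
  next
    case False
    then have c2: "card S \<ge> 2" by simp
    then obtain u where u: "u \<in> S" by fastforce
    have fT: "finite (S - {u})" using less.prems by simp
    have "card (S - {u}) \<ge> 1" using c2 u less.prems by simp
    then have neT: "S - {u} \<noteq> {}" by fastforce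
    obtain w where w: "w \<in> S - {u}" "\<forall>x\<in>S - {u}. le (t x u) (t w u)"
      using argmax[OF fT neT, of "\<lambda>x. t x u"] by blast
    define S0 where "S0 = S - {u,w}"
    have uw: "u \<noteq> w" "u \<in> S" "w \<in> S" using w u by auto
    have Seq: "S = S0 \<union> {u,w}" "u \<notin> S0" "w \<notin> S0" using uw unfolding S0_def by auto
    have fS0: "finite S0" using less.prems unfolding S0_def by simp
    have cS: "card S = card S0 + 2" using Seq fS0 uw by (simp add: card_insert_if)
    have S0n: "S0 \<subseteq> {..<n}" using less.prems unfolding S0_def by auto
    have un: "u < n" "w < n" using less.prems uw by auto
    obtain vs0 M0 where IH: "M0 \<subseteq> S0" "card M0 \<le> 1" "M0 \<noteq> {} \<longrightarrow> card S0 \<le> 3"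
      "length vs0 \<le> card S0 ^ 2 div 4" "\<forall>v\<in>set vs0. good v"
      "\<forall>i\<in>S0. \<forall>j\<in>S0. (i \<noteq> j \<or> i \<notin> M0) \<longrightarrow> covers vs0 i j"
      using less.hyps[of S0] cS fS0 S0n by auto
    have xn: "\<And>x. x \<in> S0 \<Longrightarrow> x < n" using S0n by auto
    have xne: "\<And>x. x \<in> S0 \<Longrightarrow> x \<noteq> u \<and> x \<noteq> w" using Seq by auto
    have chg: "\<And>x. x \<in> S0 \<Longrightarrow> good (cherry x u w)"
    proof -
      fix x assume x: "x \<in> S0"
      have "x \<in> S - {u}" using x Seq by auto
      then have "le (t x u) (t w u)" using w(2) by blast
      then show "good (cherry x u w)" using cherry_good[of x u w] xn[OF x] xne[OF x] un uw by auto
    qed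
    have len: "card S ^ 2 div 4 = card S0 ^ 2 div 4 + card S0 + 1" using cS sq_div4 by simp
    show ?thesis
    proof (cases "S0 \<subseteq> M0")
      case True
      have "M0 = S0" using True IH(1) by blast
      then have cS0: "card S0 \<le> 1" using IH(2) by simp
      define vs where "vs = vs0 @ map (\<lambda>x. cherry x u w) (sorted_list_of_set S0) @ [edge u w]"
      have setvs: "set vs = set vs0 \<union> (\<lambda>x. cherry x u w) ` S0 \<union> {edge u w}"
        unfolding vs_def using fS0 by auto
      have C0: "\<And>i j. i \<in> S0 \<Longrightarrow> j \<in> S0 \<Longrightarrow> covers vs i j"
      proof -
        fix i j assume ij: "i \<in> S0" "j \<in> S0"
        then have "i = j" using cS0 fS0 by (metis card_le_Suc0_iff_eq One_nat_def)
        moreover have "covers vs i i" using cherry_cov(1)[of i u w] xn[OF ij(1)] xne[OF ij(1)] un uw setvs ij(1)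
          by (intro covers_in[of "cherry i u w"]) auto
        ultimately show "covers vs i j" by simp
      qed
      have C3: "\<And>i j. i \<in> S0 \<Longrightarrow> j \<in> {u,w} \<Longrightarrow> covers vs i j"
      proof -
        fix i j assume ij: "i \<in> S0" "j \<in> {u,w}"
        have m: "cherry i u w \<in> set vs" using setvs ij by auto
        show "covers vs i j" using ij cherry_cov(2,3)[of i u w] xn[OF ij(1)] xne[OF ij(1)] un uw
          covers_in[OF m] by auto
      qed
      have em: "edge u w \<in> set vs" using setvs by auto
      have C4: "covers vs u u" "covers vs u w"
        using edge_cov[of u w] un uw covers_in[OF em] by auto
      show ?thesis
      proof (intro exI[of _ vs] exI[of _ "{w}"] conjI)
        show "{w} \<subseteq> S" using uw by simp
        show "card {w} \<le> 1" by simp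
        show "{w} \<noteq> {} \<longrightarrow> card S \<le> 3" using cS cS0 by simp
        show "length vs \<le> card S ^ 2 div 4" unfolding vs_def len using IH(4) fS0 by simp
        show "\<forall>v\<in>set vs. good v" unfolding setvs using IH(5) chg edge_good[of u w] un uw by auto
        show "\<forall>i\<in>S. \<forall>j\<in>S. (i \<noteq> j \<or> i \<notin> {w}) \<longrightarrow> covers vs i j"
        proof (intro ballI impI)
          fix i j assume ij: "i \<in> S" "j \<in> S" "i \<noteq> j \<or> i \<notin> {w}"
          show "covers vs i j"
          proof (cases "i \<in> S0")
            case True
            then show ?thesis using C0 C3 ij Seq by blast
          next
            case iF: False
            then have iuw: "i \<in> {u,w}" using ij Seq by blast
            show ?thesis
            proof (cases "j \<in> S0")
              case True
              have "i < n" using iuw un by auto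
              then show ?thesis using covers_sym[OF xn[OF True] _ C3[OF True iuw]] by blast
            next
              case False
              then have "j \<in> {u,w}" using ij Seq by blast
              then show ?thesis using iuw ij C4 covers_sym[OF un(1,2) C4(2)] by auto
            qed
          qed
        qed
      qed
    next
      case False
      then obtain x0 where x0: "x0 \<in> S0" "x0 \<notin> M0" by blast
      have x0n: "x0 < n" "x0 \<noteq> u" "x0 \<noteq> w" using xn xne x0 by auto
      obtain p q where pq: "(p = u \<and> q = w) \<or> (p = w \<and> q = u)" "le (t p x0) (t q x0)"
        using total by blast
      have pqn: "p < n" "q < n" "p \<noteq> q" "p \<noteq> x0" "q \<noteq> x0" using pq un uw x0n by auto
      define R where "R = S0 - {x0}"
      have fR: "finite R" using fS0 unfolding R_def by simp
      have cR: "card R = card S0 - 1" using x0 fS0 unfolding R_def by simp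
      define vs where "vs = vs0 @ map (\<lambda>x. cherry x u w) (sorted_list_of_set R) @ [cherry p x0 q, edge q x0]"
      have setvs: "set vs = set vs0 \<union> (\<lambda>x. cherry x u w) ` R \<union> {cherry p x0 q, edge q x0}"
        unfolding vs_def using fR by auto
      have mc: "cherry p x0 q \<in> set vs" and me: "edge q x0 \<in> set vs" using setvs by auto
      have cp: "covers vs p p" "covers vs p x0" "covers vs p q"
        using cherry_cov[of p x0 q] pqn x0n covers_in[OF mc] by auto
      have ce: "covers vs q q" "covers vs q x0"
        using edge_cov[of q x0] pqn x0n covers_in[OF me] by auto
      have C0: "\<And>i j. i \<in> S0 \<Longrightarrow> j \<in> S0 \<Longrightarrow> covers vs i j"
      proof -
        fix i j assume ij: "i \<in> S0" "j \<in> S0"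
        show "covers vs i j"
        proof (cases "i \<noteq> j \<or> i \<notin> M0")
          case True
          then show ?thesis using IH(6) ij covers_mono[of vs0 i j vs] setvs by auto
        next
          case False
          then have "i = j" "i \<noteq> x0" using x0 by auto
          then have "i \<in> R" using ij unfolding R_def by auto
          then have m: "cherry i u w \<in> set vs" using setvs by auto
          show ?thesis using \<open>i = j\<close> cherry_cov(1)[of i u w] xn[OF ij(1)] xne[OF ij(1)] un uw
            covers_in[OF m] by auto
        qed
      qed
      have C3: "\<And>i j. i \<in> S0 \<Longrightarrow> j \<in> {u,w} \<Longrightarrow> covers vs i j"
      proof -
        fix i j assume ij: "i \<in> S0" "j \<in> {u,w}"
        show "covers vs i j"
        proof (cases "i = x0")
          case False
          then have "i \<in> R" using ij unfolding R_def by auto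
          then have m: "cherry i u w \<in> set vs" using setvs by auto
          show ?thesis using ij cherry_cov(2,3)[of i u w] xn[OF ij(1)] xne[OF ij(1)] un uw
            covers_in[OF m] by auto
        next
          case True
          have "j = p \<or> j = q" using ij pq by auto
          then show ?thesis
            using True covers_sym[OF pqn(1) x0n(1) cp(2)] covers_sym[OF pqn(2) x0n(1) ce(2)] by auto
        qed
      qed
      have C4: "\<And>i j. i \<in> {u,w} \<Longrightarrow> j \<in> {u,w} \<Longrightarrow> covers vs i j"
      proof -
        fix i j assume ij: "i \<in> {u,w}" "j \<in> {u,w}"
        then have "i = p \<or> i = q" "j = p \<or> j = q" using pq by auto
        then show "covers vs i j" using cp ce covers_sym[OF pqn(1,2) cp(3)] by auto
      qed
      show ?thesis
      proof (intro exI[of _ vs] exI[of _ "{}"] conjI)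
        show "{} \<subseteq> S" by simp
        show "card {} \<le> 1" by simp
        show "{} \<noteq> {} \<longrightarrow> card S \<le> 3" by simp
        have "card S0 \<ge> 1" using x0 fS0 by (metis One_nat_def Suc_leI card_gt_0_iff empty_iff)
        then show "length vs \<le> card S ^ 2 div 4" unfolding vs_def len using IH(4) fR cR by simp
        have "\<And>x. x \<in> R \<Longrightarrow> good (cherry x u w)" using chg unfolding R_def by auto
        moreover have "good (cherry p x0 q)" using cherry_good[of p x0 q] pqn x0n pq(2) by auto
        moreover have "good (edge q x0)" using edge_good[of q x0] pqn x0n by auto
        ultimately show "\<forall>v\<in>set vs. good v" unfolding setvs using IH(5) by auto
        show "\<forall>i\<in>S. \<forall>j\<in>S. (i \<noteq> j \<or> i \<notin> {}) \<longrightarrow> covers vs i j"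
        proof (intro ballI impI)
          fix i j assume ij: "i \<in> S" "j \<in> S"
          show "covers vs i j"
          proof (cases "i \<in> S0")
            case True
            then show ?thesis using C0 C3 ij Seq by blast
          next
            case iF: False
            then have iuw: "i \<in> {u,w}" using ij Seq by blast
            show ?thesis
            proof (cases "j \<in> S0")
              case True
              have "i < n" using iuw un by auto
              then show ?thesis using covers_sym[OF xn[OF True] _ C3[OF True iuw]] by blast
            next
              case False
              then have "j \<in> {u,w}" using ij Seq by blast
              then show ?thesis using iuw C4 by auto
            qed
          qed
        qed
      qed
    qed
  qed
qed

end



context tcp begin

lemma small_bound: "n < 4 \<Longrightarrow> n ^ 2 div 4 \<le> n"
proof -
  assume "n < 4"
  then have "n ^ 2 \<le> 4 * n" by (simp add: power2_eq_square)
  then have "n ^ 2 div 4 \<le> 4 * n div 4" by (rule div_le_mono)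
  then show ?thesis by simp
qed

lemma final: "\<exists>vs. (\<forall>v\<in>set vs. good v) \<and> length vs \<le> (if 4 \<le> n then n ^ 2 div 4 else n)
   \<and> (\<forall>i<n. \<forall>j<n. covers vs i j)"
proof -
  obtain vs M where m: "M \<subseteq> {..<n}" "card M \<le> 1" "M \<noteq> {} \<longrightarrow> card {..<n} \<le> 3"
    "length vs \<le> card {..<n} ^ 2 div 4" "\<forall>v\<in>set vs. good v"
    "\<forall>i\<in>{..<n}. \<forall>j\<in>{..<n}. (i \<noteq> j \<or> i \<notin> M) \<longrightarrow> covers vs i j"
    using main[of "{..<n}"] by auto
  show ?thesis
  proof (cases "M = {}")
    case True
    show ?thesis
      apply (rule exI[of _ vs])
      using m True small_bound by auto
  next
    case False
    have fM: "finite M" using m(1) finite_subset by blast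
    then have "card M \<noteq> 0" using False by simp
    then have "card M = 1" using m(2) by linarith
    then obtain y where y: "M = {y}" using card_1_singletonE by blast
    have yn: "y < n" using y m(1) by auto
    have n3: "n \<le> 3" using m(3) False by simp
    let ?ws = "vs @ [diagv y]"
    have L: "length ?ws \<le> n" using m(4) n3 yn
      by (cases "n = 1"; cases "n = 2"; cases "n = 3") (auto simp: power2_eq_square)
    have G: "\<forall>v\<in>set ?ws. good v" using m(5) diagv_good[OF yn] by auto
    have C: "\<forall>i<n. \<forall>j<n. covers ?ws i j"
    proof (intro allI impI)
      fix i j assume ij: "i < n" "j < n"
      show "covers ?ws i j"
      proof (cases "i = j \<and> i = y")
        case True
        then show ?thesis using diagv_cov[OF yn] covers_in[of "diagv y" ?ws y y] by auto
      next
        case False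
        then have "covers vs i j" using m(6) ij y by auto
        then show ?thesis using covers_mono[of vs i j ?ws] by auto
      qed
    qed
    have E: "(if 4 \<le> n then n ^ 2 div 4 else n) = n" using n3 by simp
    show ?thesis
    proof (rule exI[of _ ?ws], intro conjI)
      show "\<forall>v\<in>set ?ws. good v" by (rule G)
      show "length ?ws \<le> (if 4 \<le> n then n ^ 2 div 4 else n)" unfolding E by (rule L)
      show "\<forall>i<n. \<forall>j<n. covers ?ws i j" by (rule C)
    qed
  qed
qed

lemma rep:
  assumes "\<forall>v\<in>set vs. good v" "\<forall>i<n. \<forall>j<n. covers vs i j" "i < n" "l < n"
  shows "A i l = isum pl z (\<lambda>j. tm ((vs ! j) i) ((vs ! j) l)) (length vs)"
proof -
  obtain v where v: "v \<in> set vs" "tm (v i) (v l) = A i l" using assms(2-4) unfolding covers_def by blast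
  then obtain j0 where j0: "j0 < length vs" "vs ! j0 = v" by (metis in_set_conv_nth)
  have "\<forall>j<length vs. le (tm ((vs ! j) i) ((vs ! j) l)) (A i l)"
    using assms(1,3,4) unfolding good_def valid_def by auto
  then show ?thesis using isum_eq[of "length vs" "\<lambda>j. tm ((vs ! j) i) ((vs ! j) l)" "A i l" j0] j0 v by simp
qed

end

theorem mainTheorem6:
  fixes pl tm :: "'a \<Rightarrow> 'a \<Rightarrow> 'a" and z e :: 'a
    and n :: nat and A :: "nat \<Rightarrow> nat \<Rightarrow> 'a"
  assumes "normal_incline pl tm z e"
    and "totally_ordered_incline pl"
    and "completely_positive pl tm z n A"
  shows "cp_rank pl tm z n A \<le> max n (n^2 div 4)
     \<and> (n \<ge> 4 \<longrightarrow>
         (\<exists>m (b :: nat \<Rightarrow> nat \<Rightarrow> 'a). m \<le> n^2 div 4 \<and>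
            (\<forall>j<m. card {i. i < n \<and> b j i \<noteq> z} \<le> 3) \<and>
            (\<forall>i<n. \<forall>l<n. A i l = isum pl z (\<lambda>j. tm (b j i) (b j l)) m)))"
proof -
  interpret tni pl tm z e using assms(1,2) by unfold_locales
  obtain k B where B: "\<forall>i<n. \<forall>j<n. A i j = BBt pl tm z B k i j"
    using assms(3) unfolding completely_positive_def by blast
  define s where "s i = (THE c. tm c c = A i i)" for i
  have sq: "tm (s i) (s i) = A i i" for i unfolding s_def using usq[of "A i i"] by (rule theI')
  have Bs: "le (B i l) (s i)" if "i < n" "l < k" for i l
  proof -
    have "A i i = isum pl z (\<lambda>l. tm (B i l) (B i l)) k" using B that unfolding BBt_def by simp
    then have "le (tm (B i l) (B i l)) (A i i)"
      using isum_ge[of l k "\<lambda>l. tm (B i l) (B i l)"] that by simp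
    then show ?thesis using sq[of i] by (intro sq_le[of "B i l" "s i"]) simp
  qed
  interpret tcp pl tm z e A n s
  proof unfold_locales
    fix i j assume ij: "i < n" "j < n"
    have "(\<lambda>l. tm (B i l) (B j l)) = (\<lambda>l. tm (B j l) (B i l))" by (rule ext, rule tm_comm)
    then show "A i j = A j i" using B ij unfolding BBt_def by simp
    have "\<forall>l<k. le (tm (B i l) (B j l)) (tm (s i) (s j))" using Bs ij mono2 by blast
    then have "le (isum pl z (\<lambda>l. tm (B i l) (B j l)) k) (tm (s i) (s j))" by (rule isum_le)
    then show "le (A i j) (tm (s i) (s j))" using B ij unfolding BBt_def by simp
  next
    fix i assume "i < n" show "A i i = tm (s i) (s i)" using sq by simp
  qed
  obtain vs where vs: "\<forall>v\<in>set vs. good v" "length vs \<le> (if 4 \<le> n then n ^ 2 div 4 else n)"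
    "\<forall>i<n. \<forall>j<n. covers vs i j" using final by blast
  have R: "\<forall>i<n. \<forall>l<n. A i l = isum pl z (\<lambda>j. tm ((vs ! j) i) ((vs ! j) l)) (length vs)"
    using rep[OF vs(1,3)] by blast
  have "cp_rank pl tm z n A \<le> length vs"
    unfolding cp_rank_def
    by (rule Least_le, rule exI[of _ "\<lambda>i l. (vs ! l) i"]) (use R in \<open>simp add: BBt_def\<close>)
  moreover have "length vs \<le> max n (n^2 div 4)" using vs(2) by (auto split: if_splits)
  moreover have "n \<ge> 4 \<longrightarrow> (\<exists>m (b :: nat \<Rightarrow> nat \<Rightarrow> 'a). m \<le> n^2 div 4 \<and>
            (\<forall>j<m. card {i. i < n \<and> b j i \<noteq> z} \<le> 3) \<and>
            (\<forall>i<n. \<forall>l<n. A i l = isum pl z (\<lambda>j. tm (b j i) (b j l)) m))"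
  proof
    assume "n \<ge> 4"
    show "\<exists>m (b :: nat \<Rightarrow> nat \<Rightarrow> 'a). m \<le> n^2 div 4 \<and>
            (\<forall>j<m. card {i. i < n \<and> b j i \<noteq> z} \<le> 3) \<and>
            (\<forall>i<n. \<forall>l<n. A i l = isum pl z (\<lambda>j. tm (b j i) (b j l)) m)"
      apply (rule exI[of _ "length vs"], rule exI[of _ "\<lambda>j. vs ! j"])
      using vs(1,2) R \<open>n \<ge> 4\<close> unfolding good_def by auto
  qed
  ultimately show ?thesis by (meson order_trans)
qed


end
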